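(* Let $X=\{x_1,\ldots,x_n\}\subset\mathbb{R}^d$ be a configuration of dimension $d$ (affine hull equal to $\mathbb{R}^d$), and suppose $\Delta_{d+2\,\ldots\, n}\neq 0$. Then a weight vector $(w_1,\ldots,w_n)$ belongs to $\mathbb{W}_0(X)$ if and only if \[(-1)^{i-d}\,w_i\,\Delta_{d+2\,\ldots\, n}=\sum_{l=d+2}^n w_l\,\Delta_{i\,d+2\,\ldots\,\widehat{l}\,\ldots\, n},\qquad i=1,\ldots,d+1,\] where $\widehat{l}$ indicates that the index $l$ is omitted from the list.
   Context: $\mathbb{W}_0(X)\subseteq\mathbb{R}^n$ is the space of weight vectors $(w_1,\ldots,w_n)$ with $\sum_j w_j=0$ and $\sum_j w_jx_j=0$ (equivalently $\sum_j w_j\overrightarrow{px_j}=\overrightarrow{O}$ for all $p$). For indices $j_1<\cdots<j_\beta$, $\Delta_{j_1\ldots j_\beta}$ denotes the oriented volume of the subconfiguration $X\setminus\{x_{j_1},\ldots,x_{j_\beta}\}$: when this subconfiguration has $d+1$ points, it is the determinant of its $(d+1)\times(d+1)$ augmented configuration matrix, whose columns are $\binom{1}{x_j}$ for the remaining points $x_j$ in increasing order of index (and the volume is zero whenever the subconfiguration is not a $d$-simplex). In the indices $i\,d+2\ldots\widehat{l}\ldots n$, the removed points are $x_i$ and all $x_k$ with $d+2\le k\le n$, $k\ne l$. *)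

theory Defs
  imports Complex_Main "Jordan_Normal_Form.Determinant"
begin

text \<open>A configuration X = {x_1,...,x_n} in R^d is given by x :: nat => nat => real,
  where point x_j (1 <= j <= n) has coordinates x j k for 0 <= k < d.\<close>

definition affine_spanning :: "nat \<Rightarrow> nat \<Rightarrow> (nat \<Rightarrow> nat \<Rightarrow> real) \<Rightarrow> bool" where
  "affine_spanning d n x \<longleftrightarrow>
     (\<forall>p :: nat \<Rightarrow> real. \<exists>c :: nat \<Rightarrow> real.
        (\<Sum>j=1..n. c j) = 1 \<and> (\<forall>k<d. p k = (\<Sum>j=1..n. c j * x j k)))"

definition W0 :: "nat \<Rightarrow> nat \<Rightarrow> (nat \<Rightarrow> nat \<Rightarrow> real) \<Rightarrow> (nat \<Rightarrow> real) set" where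
  "W0 d n x = {w. (\<Sum>j=1..n. w j) = 0 \<and> (\<forall>k<d. (\<Sum>j=1..n. w j * x j k) = 0)}"

definition aug_matrix :: "nat \<Rightarrow> (nat \<Rightarrow> nat \<Rightarrow> real) \<Rightarrow> nat list \<Rightarrow> real mat" where
  "aug_matrix d x js = mat (d+1) (length js)
     (\<lambda>(r, c). if r = 0 then 1 else x (js ! c) (r - 1))"

text \<open>Oriented volume Delta_R of the subconfiguration X minus {x_j | j in R}:
  determinant of its augmented matrix (remaining points in increasing order of index)
  if it has exactly d+1 points, and 0 otherwise.\<close>
definition Delta :: "nat \<Rightarrow> nat \<Rightarrow> (nat \<Rightarrow> nat \<Rightarrow> real) \<Rightarrow> nat set \<Rightarrow> real" where
  "Delta d n x R =
     (let js = sorted_list_of_set ({1..n} - R)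
      in if length js = d + 1 then det (aug_matrix d x js) else 0)"

end

theory Submission
  imports Defs
begin

lemma sign_lemma:
  assumes "k \<le> d"
  shows "(-1::real) powi (int (k+1) - int d) * (-1)^(d-k) = -1"
proof -
  have m1: "(-1::real) powi m = (if even m then 1 else -1)" for m :: int
    by (cases "even m") (simp_all add: power_int_minus_left)
  have "even (int (k+1) - int d) \<longleftrightarrow> odd (d-k)" using assms
    by (simp add: of_nat_diff[symmetric] even_diff) (metis Suc_diff_le assms even_Suc even_diff_nat of_nat_diff)
  then show ?thesis by (simp add: m1 )
qed

lemma aug_carrier: "aug_matrix d x js \<in> carrier_mat (d+1) (length js)"
  by (simp add: aug_matrix_def)

lemma aug_swap:
  assumes "length (xs @ a # b # ys) = d+1"
  shows "det (aug_matrix d x (xs @ b # a # ys)) = - det (aug_matrix d x (xs @ a # b # ys))"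
proof -
  let ?M = "aug_matrix d x (xs @ a # b # ys)"
  let ?k = "length xs"
  have M: "?M \<in> carrier_mat (d+1) (d+1)" using assms aug_carrier by metis
  have MT: "transpose_mat ?M \<in> carrier_mat (d+1) (d+1)" using M by simp
  have eq: "swaprows ?k (Suc ?k) (transpose_mat ?M) = transpose_mat (aug_matrix d x (xs @ b # a # ys))"
    using assms
    by (intro eq_matI) (auto simp: mat_swaprows_def aug_matrix_def nth_append nth_Cons split: nat.splits)
  have "det (aug_matrix d x (xs @ b # a # ys)) = det (transpose_mat (aug_matrix d x (xs @ b # a # ys)))"
    using assms by (intro det_transpose[symmetric]) (auto simp: aug_matrix_def)
  also have "\<dots> = - det (transpose_mat ?M)" unfolding eq[symmetric]
    by (rule det_swaprows[OF _ _ _ MT]) (use assms in auto)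
  also have "det (transpose_mat ?M) = det ?M" by (rule det_transpose[OF M])
  finally show ?thesis .
qed

lemma aug_move:
  assumes "length (xs @ l # ys) = d+1"
  shows "det (aug_matrix d x (xs @ l # ys)) = (-1)^(length ys) * det (aug_matrix d x (xs @ ys @ [l]))"
  using assms
proof (induction ys arbitrary: xs)
  case Nil
  then show ?case by simp
next
  case (Cons y ys)
  have "det (aug_matrix d x (xs @ l # y # ys)) = - det (aug_matrix d x (xs @ y # l # ys))"
    using aug_swap[of xs y l ys d x] Cons.prems by simp
  also have "xs @ y # l # ys = (xs @ [y]) @ l # ys" by simp
  also have "det (aug_matrix d x ((xs @ [y]) @ l # ys)) = (-1)^(length ys) * det (aug_matrix d x ((xs @ [y]) @ ys @ [l]))"
    by (rule Cons.IH) (use Cons.prems in simp)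
  finally show ?case by simp
qed


lemma smult_one_mult_vec:
  assumes "v \<in> carrier_vec N"
  shows "((a::real) \<cdot>\<^sub>m 1\<^sub>m N) *\<^sub>v v = a \<cdot>\<^sub>v v"
proof (rule eq_vecI)
  fix i assume "i < dim_vec (a \<cdot>\<^sub>v v)"
  then have i: "i < N" using assms by simp
  have "(((a::real) \<cdot>\<^sub>m 1\<^sub>m N) *\<^sub>v v) $ i = (\<Sum>k\<in>{0..<N}. (if i = k then a else 0) * v $ k)"
    using i assms by (auto simp: scalar_prod_def intro!: sum.cong)
  also have "\<dots> = (\<Sum>k\<in>{0..<N}. if i = k then a * v $ k else 0)"
    by (rule sum.cong) auto
  also have "\<dots> = a * v $ i" using i by (simp add: sum.delta)
  finally show "(((a::real) \<cdot>\<^sub>m 1\<^sub>m N) *\<^sub>v v) $ i = (a \<cdot>\<^sub>v v) $ i" using i assms by simp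
qed (use assms in simp)

declare upt_Suc[simp del]

lemma sorted_eq:
  assumes "set L = S" "sorted L" "distinct L"
  shows "sorted_list_of_set S = L"
  using assms by (metis sorted_list_of_set_sort_remdups distinct_remdups_id sorted_sort_id)

theorem theorem4p7:
  fixes d n :: nat and x :: "nat \<Rightarrow> nat \<Rightarrow> real" and w :: "nat \<Rightarrow> real"
  assumes "affine_spanning d n x"
    and "Delta d n x {d+2..n} \<noteq> 0"
  shows "w \<in> W0 d n x \<longleftrightarrow>
    (\<forall>i\<in>{1..d+1}.
       (-1::real) powi (int i - int d) * w i * Delta d n x {d+2..n} =
       (\<Sum>l=d+2..n. w l * Delta d n x ({i} \<union> ({d+2..n} - {l}))))"
proof -
  define N where "N = d + 1"
  have nge: "n \<ge> d + 1"
  proof (rule ccontr)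
    assume "\<not> n \<ge> d + 1"
    then have "{1..n} - {d+2..n} = {1..n}" by auto
    then have "length (sorted_list_of_set ({1..n} - {d+2..n})) = n" by simp
    then show False using assms(2) \<open>\<not> n \<ge> d + 1\<close> by (simp add: Delta_def Let_def)
  qed
  define A where "A = aug_matrix d x [1..<d+2]"
  have AN: "A \<in> carrier_mat N N" unfolding A_def N_def using aug_carrier[of d x "[1..<d+2]"] by simp
  have L0: "sorted_list_of_set ({1..n} - {d+2..n}) = [1..<d+2]"
    by (rule sorted_eq) (use nge in auto)
  define \<delta> where "\<delta> = det A"
  have DA: "Delta d n x {d+2..n} = \<delta>" unfolding Delta_def L0 \<delta>_def A_def by simp
  have dnz: "\<delta> \<noteq> 0" using assms(2) DA by simp
  define vv where "vv l = vec N (\<lambda>r. if r = 0 then 1 else x l (r - 1))" for l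
  have vvN: "vv l \<in> carrier_vec N" for l unfolding vv_def by simp
  have Aent: "A $$ (r, k) = vv (k+1) $ r" if "r < N" "k < N" for r k
    using that unfolding A_def vv_def N_def aug_matrix_def by (simp add: nth_upt)
  define c where "c l = (1/\<delta>) \<cdot>\<^sub>v (adj_mat A *\<^sub>v vv l)" for l
  have cN: "c l \<in> carrier_vec N" for l unfolding c_def using adj_mat(1)[OF AN] vvN by simp
  have Ac: "A *\<^sub>v c l = vv l" for l
  proof -
    have "A *\<^sub>v c l = (1/\<delta>) \<cdot>\<^sub>v (A *\<^sub>v (adj_mat A *\<^sub>v vv l))"
      unfolding c_def using AN adj_mat(1)[OF AN] vvN by (simp add: mult_mat_vec)
    also have "A *\<^sub>v (adj_mat A *\<^sub>v vv l) = (A * adj_mat A) *\<^sub>v vv l"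
      using AN adj_mat(1)[OF AN] vvN by simp
    also have "\<dots> = \<delta> \<cdot>\<^sub>v vv l" unfolding adj_mat(2)[OF AN] \<delta>_def
      using vvN by (rule smult_one_mult_vec)
    finally show ?thesis using dnz vvN[of l] by (intro eq_vecI) auto
  qed
  have Dil: "Delta d n x ({i} \<union> ({d+2..n} - {l})) = (-1)^(d-(i-1)) * (c l $ (i-1) * \<delta>)"
    if i: "i \<in> {1..d+1}" and l: "l \<in> {d+2..n}" for i l
  proof -
    define k where "k = i - 1"
    have ik: "i = k + 1" "k < N" using i unfolding k_def N_def by auto
    have L1: "sorted_list_of_set ({1..n} - ({i} \<union> ({d+2..n} - {l}))) = [1..<i] @ [i+1..<d+2] @ [l]"
      by (rule sorted_eq) (use i l nge in \<open>auto simp: sorted_append\<close>)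
    have len: "length ([1..<i] @ [i+1..<d+2] @ [l]) = d + 1" using i by simp
    have nth: "([1..<i] @ l # [i+1..<d+2]) ! cc = (if cc = k then l else cc+1)" if "cc < d + 1" for cc
      using that ik by (auto simp: nth_append nth_Cons' nth_upt)
    have rep: "aug_matrix d x ([1..<i] @ l # [i+1..<d+2]) = replace_col A (vv l) k"
      using ik(2) len by (intro eq_matI) (auto simp: aug_matrix_def replace_col_def A_def vv_def N_def nth[simplified] nth_upt)
    have "Delta d n x ({i} \<union> ({d+2..n} - {l})) = det (aug_matrix d x ([1..<i] @ [i+1..<d+2] @ [l]))"
      unfolding Delta_def L1 Let_def using len by simp
    also have "\<dots> = (-1)^(d-k) * det (aug_matrix d x ([1..<i] @ l # [i+1..<d+2]))"
      using aug_move[of "[1..<i]" l "[i+1..<d+2]" d x] len ik by simp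
    also have "det (aug_matrix d x ([1..<i] @ l # [i+1..<d+2])) = c l $ k * \<delta>"
      unfolding rep \<delta>_def using cramer_lemma_mat[OF AN cN ik(2), of l] Ac by simp
    finally show ?thesis unfolding k_def .
  qed
  define z where "z k = w (k+1) + (\<Sum>l=d+2..n. w l * c l $ k)" for k
  have cond: "((-1::real) powi (int i - int d) * w i * Delta d n x {d+2..n} =
       (\<Sum>l=d+2..n. w l * Delta d n x ({i} \<union> ({d+2..n} - {l})))) \<longleftrightarrow> z (i-1) = 0"
    if i: "i \<in> {1..d+1}" for i
  proof -
    define k where "k = i - 1"
    define s where "s = (-1::real)^(d-k)"
    define p where "p = (-1::real) powi (int i - int d)"
    have ik: "i = k + 1" "k \<le> d" using i unfolding k_def by auto
    have ps: "p * s = -1" unfolding p_def s_def ik(1) by (rule sign_lemma[OF ik(2)])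
    have ss: "s * s = 1" unfolding s_def by (simp flip: power_add)
    have p: "p = - s" using ps ss by (metis mult.assoc mult_minus_left mult_1_right)
    have snz: "s \<noteq> 0" using ss by auto
    have "(\<Sum>l=d+2..n. w l * Delta d n x ({i} \<union> ({d+2..n} - {l}))) = (\<Sum>l=d+2..n. w l * (s * (c l $ k * \<delta>)))"
      by (rule sum.cong) (use Dil[OF i] in \<open>auto simp: s_def k_def\<close>)
    also have "\<dots> = s * \<delta> * (\<Sum>l=d+2..n. w l * c l $ k)"
      by (simp add: sum_distrib_left algebra_simps)
    finally have R: "(\<Sum>l=d+2..n. w l * Delta d n x ({i} \<union> ({d+2..n} - {l}))) = s * \<delta> * (\<Sum>l=d+2..n. w l * c l $ k)" .
    have "(p * w i * \<delta> = s * \<delta> * (\<Sum>l=d+2..n. w l * c l $ k)) \<longleftrightarrow> (s * \<delta>) * z k = 0"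
      unfolding z_def p ik(1) by (simp add: algebra_simps) (auto simp: algebra_simps)
    also have "\<dots> \<longleftrightarrow> z k = 0" using snz dnz by simp
    finally show ?thesis using R DA unfolding p_def k_def by simp
  qed
  have W0r: "w \<in> W0 d n x \<longleftrightarrow> (\<forall>r<N. (\<Sum>j=1..n. w j * vv j $ r) = 0)"
  proof
    assume "w \<in> W0 d n x"
    then have W: "(\<Sum>j=1..n. w j) = 0" "\<And>k. k < d \<Longrightarrow> (\<Sum>j=1..n. w j * x j k) = 0"
      unfolding W0_def by auto
    show "\<forall>r<N. (\<Sum>j=1..n. w j * vv j $ r) = 0"
    proof (intro allI impI)
      fix r assume r: "r < N"
      show "(\<Sum>j=1..n. w j * vv j $ r) = 0"
      proof (cases r)
        case 0 then show ?thesis using W r unfolding vv_def by simp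
      next
        case (Suc k) then show ?thesis using W(2)[of k] r unfolding vv_def N_def by simp
      qed
    qed
  next
    assume H: "\<forall>r<N. (\<Sum>j=1..n. w j * vv j $ r) = 0"
    have "(\<Sum>j=1..n. w j) = 0" using H[rule_format, of 0] unfolding vv_def N_def by simp
    moreover have "(\<Sum>j=1..n. w j * x j k) = 0" if "k < d" for k
      using H[rule_format, of "Suc k"] that unfolding vv_def N_def by simp
    ultimately show "w \<in> W0 d n x" unfolding W0_def by simp
  qed
  have rowsum: "(\<Sum>j=1..n. w j * vv j $ r) = (\<Sum>k\<in>{0..<N}. A $$ (r, k) * z k)" if r: "r < N" for r
  proof -
    have U: "{1..n} = {1..d+1} \<union> {d+2..n}" using nge by auto
    have "(\<Sum>j=1..n. w j * vv j $ r) = (\<Sum>j=1..d+1. w j * vv j $ r) + (\<Sum>l=d+2..n. w l * vv l $ r)"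
      unfolding U by (rule sum.union_disjoint) auto
    also have "(\<Sum>j=1..d+1. w j * vv j $ r) = (\<Sum>k\<in>{0..<N}. A $$ (r, k) * w (k+1))"
    proof -
      have "(\<Sum>j=1..d+1. w j * vv j $ r) = (\<Sum>k\<in>{0..<N}. w (Suc k) * vv (Suc k) $ r)"
      proof -
        have e1: "{1..d+1} = {Suc 0..Suc d}" "{0..<N} = {0..d}" unfolding N_def by auto
        show ?thesis unfolding e1 by (rule sum.shift_bounds_cl_Suc_ivl)
      qed
      also have "\<dots> = (\<Sum>k\<in>{0..<N}. A $$ (r, k) * w (k+1))"
        by (rule sum.cong) (use Aent r in auto)
      finally show ?thesis .
    qed
    also have "(\<Sum>l=d+2..n. w l * vv l $ r) = (\<Sum>l=d+2..n. w l * (\<Sum>k\<in>{0..<N}. A $$ (r, k) * c l $ k))"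
    proof (rule sum.cong)
      fix l
      have "vv l $ r = (A *\<^sub>v c l) $ r" using Ac by simp
      also have "\<dots> = (\<Sum>k\<in>{0..<N}. A $$ (r, k) * c l $ k)"
        using AN cN[of l] r by (simp add: scalar_prod_def)
      finally show "w l * vv l $ r = w l * (\<Sum>k\<in>{0..<N}. A $$ (r, k) * c l $ k)" by simp
    qed simp
    also have "\<dots> = (\<Sum>k\<in>{0..<N}. A $$ (r, k) * (\<Sum>l=d+2..n. w l * c l $ k))"
      by (simp add: sum_distrib_left algebra_simps) (rule sum.swap)
    finally show ?thesis unfolding z_def by (simp add: distrib_left sum.distrib)
  qed
  have zeq: "(\<forall>r<N. (\<Sum>k\<in>{0..<N}. A $$ (r, k) * z k) = 0) \<longleftrightarrow> (\<forall>k<N. z k = 0)"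
  proof
    assume H: "\<forall>r<N. (\<Sum>k\<in>{0..<N}. A $$ (r, k) * z k) = 0"
    define zv where "zv = vec N z"
    have zvN: "zv \<in> carrier_vec N" unfolding zv_def by simp
    have Az: "A *\<^sub>v zv = 0\<^sub>v N"
      using AN H by (intro eq_vecI) (auto simp: scalar_prod_def zv_def)
    have "adj_mat A *\<^sub>v (A *\<^sub>v zv) = (adj_mat A * A) *\<^sub>v zv"
      using AN adj_mat(1)[OF AN] zvN by simp
    also have "\<dots> = \<delta> \<cdot>\<^sub>v zv" unfolding adj_mat(3)[OF AN] \<delta>_def by (rule smult_one_mult_vec[OF zvN])
    moreover have "adj_mat A *\<^sub>v 0\<^sub>v N = 0\<^sub>v N"
      using adj_mat(1)[OF AN] by (intro eq_vecI) auto
    ultimately have "\<delta> \<cdot>\<^sub>v zv = 0\<^sub>v N" unfolding Az by simp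
    then have E: "(\<delta> \<cdot>\<^sub>v zv) $ k = 0\<^sub>v N $ k" for k by simp
    show "\<forall>k<N. z k = 0"
    proof (intro allI impI)
      fix k assume k: "k < N"
      have "\<delta> * z k = 0" using E[of k] k zvN unfolding zv_def by simp
      then show "z k = 0" using dnz by simp
    qed
  qed simp
  have "w \<in> W0 d n x \<longleftrightarrow> (\<forall>k<N. z k = 0)" using W0r rowsum zeq by simp
  also have "\<dots> \<longleftrightarrow> (\<forall>i\<in>{1..d+1}. z (i-1) = 0)"
  proof
    assume H: "\<forall>k<N. z k = 0"
    show "\<forall>i\<in>{1..d+1}. z (i-1) = 0" using H unfolding N_def by auto
  next
    assume H: "\<forall>i\<in>{1..d+1}. z (i-1) = 0"
    show "\<forall>k<N. z k = 0"
    proof (intro allI impI)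
      fix k assume "k < N"
      then have "k+1 \<in> {1..d+1}" by (simp add: N_def)
      from H[rule_format, OF this] show "z k = 0" by simp
    qed
  qed
  also have "\<dots> \<longleftrightarrow> (\<forall>i\<in>{1..d+1}.
       (-1::real) powi (int i - int d) * w i * Delta d n x {d+2..n} =
       (\<Sum>l=d+2..n. w l * Delta d n x ({i} \<union> ({d+2..n} - {l}))))"
    using cond by simp
  finally show ?thesis .
qed

end
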